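(* Let $\mathbf L=(L,\vee,\wedge)$ be a partial lattice and $a,b,c,d\in L$. Then: (i) $\mathbf L^*=(L^*,\leq^* )$ is a lattice with lattice operations $x\vee^*y:=\sup_{\leq^*}(x,y)$ and $x\wedge^*y:=\inf_{\leq^*}(x,y)$ for $x,y\in L^*$; (ii) $a\vee b$ is defined in $\mathbf L$ and equals $c$ iff $a\vee^*b=c$; and $a\wedge b$ is defined in $\mathbf L$ and equals $d$ iff $a\wedge^*b=d$; (iii) $a\vee^*b=a\vee b$ if $U(a,b)\neq\emptyset$ and $a\vee^*b=1$ otherwise; $a\wedge^*b=a\wedge b$ if $L(a,b)\neq\emptyset$ and $a\wedge^*b=0$ otherwise.
   Context: A partial lattice is a set $L$ with two partial binary operations $\vee,\wedge$ satisfying strong idempotency, commutativity and associativity (for every assignment, one side is defined iff the other is, and then they are equal) and the duality conditions: if $a\vee b$ is defined and equals $a$ then $a\wedge b$ is defined and equals $b$, and dually. Its induced order is $x\leq y$ iff $x\vee y$ is defined and equals $y$ (iff $x\wedge y$ is defined and equals $x$). $U(a,b)$ and $L(a,b)$ denote the sets of common upper, resp. lower, bounds of $a,b$ in $(L,\leq)$. The two-point extension $\mathbf L^*=(L^*,\leq^* )$ of $\mathbf L$, with new elements $0,1\notin L$: $L^*=L$ if $\vee$ and $\wedge$ are both everywhere defined; $L^*=L\cup\{1\}$ if $\wedge$ is everywhere defined but $\vee$ is not; $L^*=L\cup\{0\}$ if $\vee$ is everywhere defined but $\wedge$ is not; $L^*=L\cup\{0,1\}$ if neither is everywhere defined. The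 order $\leq^*$ on $L^*$ is $\leq$ together with $0\leq^* x$ and $x\leq^* 1$ for all $x\in L^*$ (whenever $0$, resp. $1$, belongs to $L^*$). *)

theory Defs
  imports Main
begin

text \<open>A partial lattice on carrier L: partial operations are modelled as
  option-valued functions; only their behaviour on L matters.\<close>

definition partial_lattice ::
  "'a set \<Rightarrow> ('a \<Rightarrow> 'a \<Rightarrow> 'a option) \<Rightarrow> ('a \<Rightarrow> 'a \<Rightarrow> 'a option) \<Rightarrow> bool" where
  "partial_lattice L J M \<longleftrightarrow>
     (\<forall>x\<in>L. \<forall>y\<in>L. \<forall>z. J x y = Some z \<longrightarrow> z \<in> L) \<and>
     (\<forall>x\<in>L. \<forall>y\<in>L. \<forall>z. M x y = Some z \<longrightarrow> z \<in> L) \<and>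
     (\<forall>x\<in>L. J x x = Some x) \<and>
     (\<forall>x\<in>L. M x x = Some x) \<and>
     (\<forall>x\<in>L. \<forall>y\<in>L. J x y = J y x) \<and>
     (\<forall>x\<in>L. \<forall>y\<in>L. M x y = M y x) \<and>
     (\<forall>x\<in>L. \<forall>y\<in>L. \<forall>z\<in>L.
        Option.bind (J x y) (\<lambda>u. J u z) = Option.bind (J y z) (\<lambda>v. J x v)) \<and>
     (\<forall>x\<in>L. \<forall>y\<in>L. \<forall>z\<in>L.
        Option.bind (M x y) (\<lambda>u. M u z) = Option.bind (M y z) (\<lambda>v. M x v)) \<and>
     (\<forall>a\<in>L. \<forall>b\<in>L. J a b = Some a \<longrightarrow> M a b = Some b) \<and>
     (\<forall>a\<in>L. \<forall>b\<in>L. M a b = Some a \<longrightarrow> J a b = Some b)"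

definition pleq :: "('a \<Rightarrow> 'a \<Rightarrow> 'a option) \<Rightarrow> 'a \<Rightarrow> 'a \<Rightarrow> bool" where
  "pleq J x y \<longleftrightarrow> J x y = Some y"

definition upper_bounds :: "'a set \<Rightarrow> ('a \<Rightarrow> 'a \<Rightarrow> 'a option) \<Rightarrow> 'a \<Rightarrow> 'a \<Rightarrow> 'a set" where
  "upper_bounds L J a b = {u \<in> L. pleq J a u \<and> pleq J b u}"

definition lower_bounds :: "'a set \<Rightarrow> ('a \<Rightarrow> 'a \<Rightarrow> 'a option) \<Rightarrow> 'a \<Rightarrow> 'a \<Rightarrow> 'a set" where
  "lower_bounds L J a b = {u \<in> L. pleq J u a \<and> pleq J u b}"

datatype 'a ext = Zero | Elem 'a | One

definition ext_carrier ::
  "'a set \<Rightarrow> ('a \<Rightarrow> 'a \<Rightarrow> 'a option) \<Rightarrow> ('a \<Rightarrow> 'a \<Rightarrow> 'a option) \<Rightarrow> 'a ext set" where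
  "ext_carrier L J M =
     Elem ` L
     \<union> (if \<forall>x\<in>L. \<forall>y\<in>L. M x y \<noteq> None then {} else {Zero})
     \<union> (if \<forall>x\<in>L. \<forall>y\<in>L. J x y \<noteq> None then {} else {One})"

fun ext_le :: "('a \<Rightarrow> 'a \<Rightarrow> 'a option) \<Rightarrow> 'a ext \<Rightarrow> 'a ext \<Rightarrow> bool" where
  "ext_le J Zero _ = True"
| "ext_le J _ One = True"
| "ext_le J (Elem x) (Elem y) = pleq J x y"
| "ext_le J _ _ = False"

definition is_lub :: "'b set \<Rightarrow> ('b \<Rightarrow> 'b \<Rightarrow> bool) \<Rightarrow> 'b \<Rightarrow> 'b \<Rightarrow> 'b \<Rightarrow> bool" where
  "is_lub S R x y z \<longleftrightarrow> z \<in> S \<and> R x z \<and> R y z \<and> (\<forall>w\<in>S. R x w \<and> R y w \<longrightarrow> R z w)"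

definition is_glb :: "'b set \<Rightarrow> ('b \<Rightarrow> 'b \<Rightarrow> bool) \<Rightarrow> 'b \<Rightarrow> 'b \<Rightarrow> 'b \<Rightarrow> bool" where
  "is_glb S R x y z \<longleftrightarrow> z \<in> S \<and> R z x \<and> R z y \<and> (\<forall>w\<in>S. R w x \<and> R w y \<longrightarrow> R w z)"

definition lattice_on :: "'b set \<Rightarrow> ('b \<Rightarrow> 'b \<Rightarrow> bool) \<Rightarrow> bool" where
  "lattice_on S R \<longleftrightarrow>
     (\<forall>x\<in>S. R x x) \<and>
     (\<forall>x\<in>S. \<forall>y\<in>S. R x y \<and> R y x \<longrightarrow> x = y) \<and>
     (\<forall>x\<in>S. \<forall>y\<in>S. \<forall>z\<in>S. R x y \<and> R y z \<longrightarrow> R x z) \<and>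
     (\<forall>x\<in>S. \<forall>y\<in>S. \<exists>z. is_lub S R x y z) \<and>
     (\<forall>x\<in>S. \<forall>y\<in>S. \<exists>z. is_glb S R x y z)"

definition sup_star ::
  "'a set \<Rightarrow> ('a \<Rightarrow> 'a \<Rightarrow> 'a option) \<Rightarrow> ('a \<Rightarrow> 'a \<Rightarrow> 'a option) \<Rightarrow> 'a ext \<Rightarrow> 'a ext \<Rightarrow> 'a ext" where
  "sup_star L J M x y = (THE z. is_lub (ext_carrier L J M) (ext_le J) x y z)"

definition inf_star ::
  "'a set \<Rightarrow> ('a \<Rightarrow> 'a \<Rightarrow> 'a option) \<Rightarrow> ('a \<Rightarrow> 'a \<Rightarrow> 'a option) \<Rightarrow> 'a ext \<Rightarrow> 'a ext \<Rightarrow> 'a ext" where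
  "inf_star L J M x y = (THE z. is_glb (ext_carrier L J M) (ext_le J) x y z)"

end

theory Submission
  imports Defs
begin

context
  fixes L :: "'a set" and J M :: "'a \<Rightarrow> 'a \<Rightarrow> 'a option"
  assumes PL: "partial_lattice L J M"
begin

lemmas PLc = PL[unfolded partial_lattice_def]

lemma Jcl: "x \<in> L \<Longrightarrow> y \<in> L \<Longrightarrow> J x y = Some z \<Longrightarrow> z \<in> L"
  using PLc[THEN conjunct1] by blast
lemma Mcl: "x \<in> L \<Longrightarrow> y \<in> L \<Longrightarrow> M x y = Some z \<Longrightarrow> z \<in> L"
  using PLc[THEN conjunct2, THEN conjunct1] by blast
lemma Jid: "x \<in> L \<Longrightarrow> J x x = Some x"
  using PLc[THEN conjunct2, THEN conjunct2, THEN conjunct1] by blast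
lemma Mid: "x \<in> L \<Longrightarrow> M x x = Some x"
  using PLc[THEN conjunct2, THEN conjunct2, THEN conjunct2, THEN conjunct1] by blast
lemma Jc: "x \<in> L \<Longrightarrow> y \<in> L \<Longrightarrow> J x y = J y x"
  using PLc[THEN conjunct2, THEN conjunct2, THEN conjunct2, THEN conjunct2, THEN conjunct1] by blast
lemma Mc: "x \<in> L \<Longrightarrow> y \<in> L \<Longrightarrow> M x y = M y x"
  using PLc[THEN conjunct2, THEN conjunct2, THEN conjunct2, THEN conjunct2, THEN conjunct2, THEN conjunct1] by blast
lemma Ja: "x \<in> L \<Longrightarrow> y \<in> L \<Longrightarrow> z \<in> L \<Longrightarrow>
   Option.bind (J x y) (\<lambda>u. J u z) = Option.bind (J y z) (\<lambda>v. J x v)"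
  using PLc[THEN conjunct2, THEN conjunct2, THEN conjunct2, THEN conjunct2, THEN conjunct2, THEN conjunct2, THEN conjunct1] by blast
lemma Ma: "x \<in> L \<Longrightarrow> y \<in> L \<Longrightarrow> z \<in> L \<Longrightarrow>
   Option.bind (M x y) (\<lambda>u. M u z) = Option.bind (M y z) (\<lambda>v. M x v)"
  using PLc[THEN conjunct2, THEN conjunct2, THEN conjunct2, THEN conjunct2, THEN conjunct2, THEN conjunct2, THEN conjunct2, THEN conjunct1] by blast
lemma D1: "a \<in> L \<Longrightarrow> b \<in> L \<Longrightarrow> J a b = Some a \<Longrightarrow> M a b = Some b"
  using PLc[THEN conjunct2, THEN conjunct2, THEN conjunct2, THEN conjunct2, THEN conjunct2, THEN conjunct2, THEN conjunct2, THEN conjunct2, THEN conjunct1] by blast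
lemma D2: "a \<in> L \<Longrightarrow> b \<in> L \<Longrightarrow> M a b = Some a \<Longrightarrow> J a b = Some b"
  using PLc[THEN conjunct2, THEN conjunct2, THEN conjunct2, THEN conjunct2, THEN conjunct2, THEN conjunct2, THEN conjunct2, THEN conjunct2, THEN conjunct2] by blast

lemma pM: "x \<in> L \<Longrightarrow> y \<in> L \<Longrightarrow> pleq J x y \<longleftrightarrow> M x y = Some x"
  unfolding pleq_def using D1 D2 Jc Mc by metis

lemma prefl: "x \<in> L \<Longrightarrow> pleq J x x" unfolding pleq_def using Jid by blast
lemma pantisym: "x \<in> L \<Longrightarrow> y \<in> L \<Longrightarrow> pleq J x y \<Longrightarrow> pleq J y x \<Longrightarrow> x = y"
  unfolding pleq_def using Jc by (metis option.inject)
lemma ptrans: "x \<in> L \<Longrightarrow> y \<in> L \<Longrightarrow> z \<in> L \<Longrightarrow> pleq J x y \<Longrightarrow> pleq J y z \<Longrightarrow> pleq J x z"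
  unfolding pleq_def using Ja[of x y z] by simp

lemma Jub: "x \<in> L \<Longrightarrow> y \<in> L \<Longrightarrow> J x y = Some z \<Longrightarrow> pleq J x z \<and> pleq J y z"
proof -
  assume h: "x \<in> L" "y \<in> L" "J x y = Some z"
  have 1: "J x z = Some z" using Ja[of x x y] h Jid by simp
  have "J y x = Some z" using h Jc by metis
  hence 2: "J y z = Some z" using Ja[of y y x] h Jid by simp
  show ?thesis using 1 2 unfolding pleq_def by simp
qed

lemma Jleast: "x \<in> L \<Longrightarrow> y \<in> L \<Longrightarrow> u \<in> L \<Longrightarrow> J x y = Some z \<Longrightarrow> pleq J x u \<Longrightarrow> pleq J y u
  \<Longrightarrow> pleq J z u"
  unfolding pleq_def using Ja[of x y u] by simp

lemma Jex: "x \<in> L \<Longrightarrow> y \<in> L \<Longrightarrow> u \<in> L \<Longrightarrow> pleq J x u \<Longrightarrow> pleq J y u \<Longrightarrow> J x y \<noteq> None"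
  unfolding pleq_def using Ja[of x y u] by (cases "J x y") auto

lemma Mlb: "x \<in> L \<Longrightarrow> y \<in> L \<Longrightarrow> M x y = Some z \<Longrightarrow> pleq J z x \<and> pleq J z y"
proof -
  assume h: "x \<in> L" "y \<in> L" "M x y = Some z"
  have zL: "z \<in> L" using Mcl h by blast
  have 1: "M x z = Some z" using Ma[of x x y] h Mid by simp
  have "M y x = Some z" using h Mc by metis
  hence 2: "M y z = Some z" using Ma[of y y x] h Mid by simp
  show ?thesis using 1 2 pM zL h Mc by metis
qed

lemma Mgreat: "x \<in> L \<Longrightarrow> y \<in> L \<Longrightarrow> u \<in> L \<Longrightarrow> M x y = Some z \<Longrightarrow> pleq J u x \<Longrightarrow> pleq J u y
  \<Longrightarrow> pleq J u z"
proof -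
  assume h: "x \<in> L" "y \<in> L" "u \<in> L" "M x y = Some z" "pleq J u x" "pleq J u y"
  have zL: "z \<in> L" using Mcl h by blast
  have "M u x = Some u" "M u y = Some u" using h pM by auto
  hence "M u z = Some u" using Ma[of u x y] h by simp
  thus ?thesis using pM h zL by blast
qed

lemma Mex: "x \<in> L \<Longrightarrow> y \<in> L \<Longrightarrow> u \<in> L \<Longrightarrow> pleq J u x \<Longrightarrow> pleq J u y \<Longrightarrow> M x y \<noteq> None"
proof -
  assume h: "x \<in> L" "y \<in> L" "u \<in> L" "pleq J u x" "pleq J u y"
  have "M u x = Some u" "M u y = Some u" using h pM by auto
  thus ?thesis using Ma[of u x y] h by (cases "M x y") auto
qed

abbreviation "S \<equiv> ext_carrier L J M"
abbreviation "R \<equiv> ext_le J"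

lemma Scases: "z \<in> S \<Longrightarrow> z = Zero \<or> z = One \<or> (\<exists>a\<in>L. z = Elem a)"
  by (cases z) (auto simp: ext_carrier_def split: if_splits)

lemma ElemS[simp]: "Elem a \<in> S \<longleftrightarrow> a \<in> L"
  by (auto simp: ext_carrier_def split: if_splits)

lemma OneS: "a \<in> L \<Longrightarrow> b \<in> L \<Longrightarrow> J a b = None \<Longrightarrow> One \<in> S"
proof -
  assume "a \<in> L" "b \<in> L" "J a b = None"
  hence nt: "\<not> (\<forall>x\<in>L. \<forall>y\<in>L. J x y \<noteq> None)" by blast
  show ?thesis unfolding ext_carrier_def if_not_P[OF nt] by blast
qed
lemma ZeroS: "a \<in> L \<Longrightarrow> b \<in> L \<Longrightarrow> M a b = None \<Longrightarrow> Zero \<in> S"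
proof -
  assume "a \<in> L" "b \<in> L" "M a b = None"
  hence nt: "\<not> (\<forall>x\<in>L. \<forall>y\<in>L. M x y \<noteq> None)" by blast
  show ?thesis unfolding ext_carrier_def if_not_P[OF nt] by blast
qed

lemma R_One[simp]: "R x One" by (cases x) auto

lemma Rrefl: "x \<in> S \<Longrightarrow> R x x"
  by (cases x) (auto intro: prefl)

lemma Rantisym: "x \<in> S \<Longrightarrow> y \<in> S \<Longrightarrow> R x y \<Longrightarrow> R y x \<Longrightarrow> x = y"
  by (cases x; cases y) (auto intro: pantisym)

lemma Rtrans: "x \<in> S \<Longrightarrow> y \<in> S \<Longrightarrow> z \<in> S \<Longrightarrow> R x y \<Longrightarrow> R y z \<Longrightarrow> R x z"
  by (cases x; cases y; cases z) (auto intro: ptrans)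

lemma lub_uniq: "is_lub S R x y z \<Longrightarrow> is_lub S R x y z' \<Longrightarrow> z = z'"
  unfolding is_lub_def using Rantisym by blast
lemma glb_uniq: "is_glb S R x y z \<Longrightarrow> is_glb S R x y z' \<Longrightarrow> z = z'"
  unfolding is_glb_def using Rantisym by blast

lemma lub_some: "a \<in> L \<Longrightarrow> b \<in> L \<Longrightarrow> J a b = Some c \<Longrightarrow> is_lub S R (Elem a) (Elem b) (Elem c)"
proof -
  assume h: "a \<in> L" "b \<in> L" "J a b = Some c"
  have cL: "c \<in> L" using Jcl h by blast
  show ?thesis unfolding is_lub_def
  proof (intro conjI ballI impI)
    fix w assume w: "w \<in> S" "R (Elem a) w \<and> R (Elem b) w"
    show "R (Elem c) w" using Scases[OF w(1)] w(2) Jleast[OF h(1,2) _ h(3)] by auto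
  qed (use h cL Jub in auto)
qed

lemma lub_none: "a \<in> L \<Longrightarrow> b \<in> L \<Longrightarrow> J a b = None \<Longrightarrow> is_lub S R (Elem a) (Elem b) One"
proof -
  assume h: "a \<in> L" "b \<in> L" "J a b = None"
  show ?thesis unfolding is_lub_def
  proof (intro conjI ballI impI)
    fix w assume w: "w \<in> S" "R (Elem a) w \<and> R (Elem b) w"
    show "R One w" using Scases[OF w(1)] w(2) Jex[OF h(1,2)] h(3) by auto
  qed (use h OneS in auto)
qed

lemma glb_some: "a \<in> L \<Longrightarrow> b \<in> L \<Longrightarrow> M a b = Some c \<Longrightarrow> is_glb S R (Elem a) (Elem b) (Elem c)"
proof -
  assume h: "a \<in> L" "b \<in> L" "M a b = Some c"
  have cL: "c \<in> L" using Mcl h by blast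
  show ?thesis unfolding is_glb_def
  proof (intro conjI ballI impI)
    fix w assume w: "w \<in> S" "R w (Elem a) \<and> R w (Elem b)"
    show "R w (Elem c)" using Scases[OF w(1)] w(2) Mgreat[OF h(1,2) _ h(3)] by auto
  qed (use h cL Mlb in auto)
qed

lemma glb_none: "a \<in> L \<Longrightarrow> b \<in> L \<Longrightarrow> M a b = None \<Longrightarrow> is_glb S R (Elem a) (Elem b) Zero"
proof -
  assume h: "a \<in> L" "b \<in> L" "M a b = None"
  show ?thesis unfolding is_glb_def
  proof (intro conjI ballI impI)
    fix w assume w: "w \<in> S" "R w (Elem a) \<and> R w (Elem b)"
    show "R w Zero" using Scases[OF w(1)] w(2) Mex[OF h(1,2)] h(3) by auto
  qed (use h ZeroS in auto)
qed

lemma lub_ex: "x \<in> S \<Longrightarrow> y \<in> S \<Longrightarrow> \<exists>z. is_lub S R x y z"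
proof -
  assume x: "x \<in> S" and y: "y \<in> S"
  show ?thesis
  proof (cases x)
    case Zero thus ?thesis using y Rrefl by (auto simp: is_lub_def intro!: exI[of _ y])
  next
    case One thus ?thesis using x by (auto simp: is_lub_def intro!: exI[of _ One]; cases y; auto)
  next
    case (Elem a)
    show ?thesis
    proof (cases y)
      case Zero thus ?thesis using x Rrefl by (auto simp: is_lub_def intro!: exI[of _ x])
    next
      case One thus ?thesis using y by (auto simp: is_lub_def intro!: exI[of _ One]; cases x; auto)
    next
      case (Elem b)
      thus ?thesis using \<open>x = Elem a\<close> x y lub_some lub_none by (cases "J a b"; simp; blast)
    qed
  qed
qed

lemma glb_ex: "x \<in> S \<Longrightarrow> y \<in> S \<Longrightarrow> \<exists>z. is_glb S R x y z"
proof -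
  assume x: "x \<in> S" and y: "y \<in> S"
  show ?thesis
  proof (cases x)
    case One thus ?thesis using y Rrefl by (auto simp: is_glb_def intro!: exI[of _ y]; cases y; auto)
  next
    case Zero thus ?thesis using x by (auto simp: is_glb_def intro!: exI[of _ Zero])
  next
    case (Elem a)
    show ?thesis
    proof (cases y)
      case One thus ?thesis using x Rrefl by (auto simp: is_glb_def intro!: exI[of _ x])
    next
      case Zero thus ?thesis using y by (auto simp: is_glb_def intro!: exI[of _ Zero])
    next
      case (Elem b)
      thus ?thesis using \<open>x = Elem a\<close> x y glb_some glb_none by (cases "M a b"; simp; blast)
    qed
  qed
qed

lemma sup_eq: "is_lub S R x y z \<Longrightarrow> sup_star L J M x y = z"
  unfolding sup_star_def using lub_uniq by blast
lemma inf_eq: "is_glb S R x y z \<Longrightarrow> inf_star L J M x y = z"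
  unfolding inf_star_def using glb_uniq by blast

end

theorem mainTheorem3:
  fixes L :: "'a set" and J M :: "'a \<Rightarrow> 'a \<Rightarrow> 'a option" and a b c d :: 'a
  assumes "partial_lattice L J M"
    and "a \<in> L" and "b \<in> L" and "c \<in> L" and "d \<in> L"
  shows "lattice_on (ext_carrier L J M) (ext_le J)
     \<and> (\<forall>x\<in>ext_carrier L J M. \<forall>y\<in>ext_carrier L J M.
          is_lub (ext_carrier L J M) (ext_le J) x y (sup_star L J M x y)
        \<and> is_glb (ext_carrier L J M) (ext_le J) x y (inf_star L J M x y))
     \<and> (J a b = Some c \<longleftrightarrow> sup_star L J M (Elem a) (Elem b) = Elem c)
     \<and> (M a b = Some d \<longleftrightarrow> inf_star L J M (Elem a) (Elem b) = Elem d)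
     \<and> (upper_bounds L J a b \<noteq> {} \<longrightarrow>
          J a b \<noteq> None \<and> sup_star L J M (Elem a) (Elem b) = Elem (the (J a b)))
     \<and> (upper_bounds L J a b = {} \<longrightarrow> sup_star L J M (Elem a) (Elem b) = One)
     \<and> (lower_bounds L J a b \<noteq> {} \<longrightarrow>
          M a b \<noteq> None \<and> inf_star L J M (Elem a) (Elem b) = Elem (the (M a b)))
     \<and> (lower_bounds L J a b = {} \<longrightarrow> inf_star L J M (Elem a) (Elem b) = Zero)"
proof -
  note P = assms(1)
  have lat: "lattice_on (ext_carrier L J M) (ext_le J)"
    unfolding lattice_on_def using Rrefl[OF P] Rantisym[OF P] Rtrans[OF P] lub_ex[OF P] glb_ex[OF P]
    by blast
  have ops: "\<forall>x\<in>ext_carrier L J M. \<forall>y\<in>ext_carrier L J M.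
          is_lub (ext_carrier L J M) (ext_le J) x y (sup_star L J M x y)
        \<and> is_glb (ext_carrier L J M) (ext_le J) x y (inf_star L J M x y)"
    using lub_ex[OF P] glb_ex[OF P] sup_eq[OF P] inf_eq[OF P] by metis
  have sJ: "sup_star L J M (Elem a) (Elem b) = (case J a b of Some z \<Rightarrow> Elem z | None \<Rightarrow> One)"
    using sup_eq[OF P] lub_some[OF P] lub_none[OF P] assms(2,3) by (cases "J a b") auto
  have iM: "inf_star L J M (Elem a) (Elem b) = (case M a b of Some z \<Rightarrow> Elem z | None \<Rightarrow> Zero)"
    using inf_eq[OF P] glb_some[OF P] glb_none[OF P] assms(2,3) by (cases "M a b") auto
  have ub: "upper_bounds L J a b \<noteq> {} \<longleftrightarrow> J a b \<noteq> None"
    using Jex[OF P] Jub[OF P] Jcl[OF P] assms(2,3) unfolding upper_bounds_def by blast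
  have lb: "lower_bounds L J a b \<noteq> {} \<longleftrightarrow> M a b \<noteq> None"
    using Mex[OF P] Mlb[OF P] Mcl[OF P] assms(2,3) unfolding lower_bounds_def by blast
  show ?thesis using lat ops sJ iM ub lb by (auto split: option.splits)
qed

end
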